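(* Let $\ell$ be a positive integer, and let $P_\ell$ be the set of all polynomials of length $\ell$ (degree $\ell-1$) in $\mathbb{C}[z]$ with nonzero constant coefficient. Define maps $n,h,r:P_\ell\to P_\ell$ by $n(f)=-f$, $h(f)=\widetilde{f}$, $r(f)=f^\dagger$. These generate a group $G_\ell=\langle n,h,r\rangle$ of permutations of $P_\ell$, and: \begin{enumerate} \item If $\ell=1$, then $G_1$ is the internal direct product of the two cyclic groups $\langle n\rangle$ and $\langle r\rangle$, each of order $2$. \item If $\ell$ is odd with $\ell>1$, then $G_\ell$ is the internal direct product of the three cyclic groups $\langle n\rangle$, $\langle h\rangle$, $\langle r\rangle$, each of order $2$. \item If $\ell$ is even, then $G_\ell$ is isomorphic to the dihedral group of order $8$ generated by $rh$ and $h$, where $rh$ has order $4$, $h$ has order $2$, and $h(rh)h^{-1}=(rh)^{-1}$. \end{enumerate} Moreover, for any $t\in G_\ell$, any $f\in P_\ell$ and any real $p\ge1$, \[ \|t(f)\|_p=\|f\|_p\quad\text{and}\quad \|t(f)\,\widetilde{t(f)}\|_p=\|f\widetilde{f}\|_p. \]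
   Context: For a polynomial $a(z)=a_0+\cdots+a_dz^d$ of degree $d$, its length is $1+d$ and $a^\dagger(z)=\overline{a_d}+\overline{a_{d-1}}z+\cdots+\overline{a_0}z^d$ (conjugate reciprocal). For a (Laurent) polynomial $a$, $\widetilde{a}(z)=a(-z)$ and $\|a\|_p=\left(\frac{1}{2\pi}\int_0^{2\pi}|a(e^{i\theta})|^pd\theta\right)^{1/p}$. *)

theory Defs
  imports "HOL-Algebra.Generated_Groups" "HOL-Algebra.Bij" "HOL-Algebra.Coset" "HOL-Algebra.Multiplicative_Group"
          "HOL-Computational_Algebra.Polynomial" "HOL-Analysis.Analysis"
begin

definition Pl :: "nat \<Rightarrow> complex poly set" where
  "Pl l = {f. degree f = l - 1 \<and> coeff f 0 \<noteq> 0}"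

definition tilde :: "complex poly \<Rightarrow> complex poly" where
  "tilde a = pcompose a [:0, -1:]"

definition dagger :: "complex poly \<Rightarrow> complex poly" where
  "dagger a = map_poly cnj (reflect_poly a)"

definition lp_norm :: "real \<Rightarrow> complex poly \<Rightarrow> real" where
  "lp_norm p a = ((1 / (2 * pi)) * integral {0..2*pi} (\<lambda>\<theta>. cmod (poly a (cis \<theta>)) powr p)) powr (1 / p)"

text \<open>The maps n, h, r as permutations of P_l (extensional, as elements of BijGroup).\<close>
definition n_map :: "nat \<Rightarrow> complex poly \<Rightarrow> complex poly" where
  "n_map l = restrict (\<lambda>f. - f) (Pl l)"

definition h_map :: "nat \<Rightarrow> complex poly \<Rightarrow> complex poly" where
  "h_map l = restrict tilde (Pl l)"

definition r_map :: "nat \<Rightarrow> complex poly \<Rightarrow> complex poly" where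
  "r_map l = restrict dagger (Pl l)"

definition G_grp :: "nat \<Rightarrow> (complex poly \<Rightarrow> complex poly) monoid" where
  "G_grp l = subgroup_generated (BijGroup (Pl l)) {n_map l, h_map l, r_map l}"

definition subgroups_prod :: "('a, 'b) monoid_scheme \<Rightarrow> 'a set list \<Rightarrow> 'a set" where
  "subgroups_prod G Hs = foldr (\<lambda>H A. H <#>\<^bsub>G\<^esub> A) Hs {\<one>\<^bsub>G\<^esub>}"

definition internal_direct_product :: "('a, 'b) monoid_scheme \<Rightarrow> 'a set list \<Rightarrow> bool" where
  "internal_direct_product G Hs \<longleftrightarrow>
     (\<forall>H \<in> set Hs. H \<lhd> G) \<and>
     subgroups_prod G Hs = carrier G \<and>
     (\<forall>i < length Hs. Hs ! i \<inter> subgroups_prod G (take i Hs @ drop (Suc i) Hs) = {\<one>\<^bsub>G\<^esub>})"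

definition d8_mult :: "int \<times> int \<Rightarrow> int \<times> int \<Rightarrow> int \<times> int" where
  "d8_mult x y = ((fst x + (-1) ^ nat (snd x) * fst y) mod 4, (snd x + snd y) mod 2)"

definition dihedral8 :: "(int \<times> int) monoid" where
  "dihedral8 = \<lparr>carrier = {0..3} \<times> {0..1}, monoid.mult = d8_mult, one = (0, 0)\<rparr>"

end

theory Submission
  imports Defs
begin


lemma coeff_tilde: "coeff (tilde f) k = (-1)^k * coeff f k"
  unfolding tilde_def
proof (induction f arbitrary: k rule: pCons_induct)
  case 0 then show ?case by simp
next
  case (pCons a p)
  have "pcompose (pCons a p) [:0, -1:] = [:a:] + pCons 0 (smult (-1) (pcompose p [:0,-1:]))"
    by (simp add: pcompose_pCons)
  then show ?case using pCons by (cases k) (auto simp: coeff_pCons)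
qed

lemma degree_tilde: "degree (tilde f) = degree f"
  unfolding tilde_def by (simp add: degree_pcompose)

lemma tilde_tilde: "tilde (tilde f) = f"
  by (rule poly_eqI) (simp add: coeff_tilde)

lemma tilde_minus: "tilde (- f) = - tilde f"
  by (rule poly_eqI) (simp add: coeff_tilde)

lemma poly_tilde: "poly (tilde f) z = poly f (- z)"
  unfolding tilde_def by (simp add: poly_pcompose)

lemma coeff_dagger: "coeff (dagger f) k = (if k > degree f then 0 else cnj (coeff f (degree f - k)))"
  unfolding dagger_def by (simp add: coeff_map_poly coeff_reflect_poly)

lemma degree_dagger: "coeff f 0 \<noteq> 0 \<Longrightarrow> degree (dagger f) = degree f"
  unfolding dagger_def by (subst degree_map_poly) auto

lemma coeff0_dagger: "coeff (dagger f) 0 = cnj (lead_coeff f)"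
  by (simp add: coeff_dagger)

lemma dagger_coeff0: "coeff f 0 \<noteq> 0 \<Longrightarrow> coeff (dagger f) 0 \<noteq> 0"
  by (auto simp add: coeff_dagger)

lemma dagger_dagger: assumes "coeff f 0 \<noteq> 0" shows "dagger (dagger f) = f"
proof (rule poly_eqI)
  fix k
  show "coeff (dagger (dagger f)) k = coeff f k"
    using assms by (auto simp: coeff_dagger degree_dagger coeff_eq_0)
qed

lemma dagger_minus: "dagger (- f) = - dagger f"
  by (rule poly_eqI) (simp add: coeff_dagger)

lemma tilde_dagger: assumes "coeff f 0 \<noteq> 0"
  shows "tilde (dagger f) = (if even (degree f) then dagger (tilde f) else - dagger (tilde f))"
proof (rule poly_eqI)
  fix k
  have d: "degree (dagger f) = degree f" using assms by (rule degree_dagger)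
  show "coeff (tilde (dagger f)) k = coeff (if even (degree f) then dagger (tilde f) else - dagger (tilde f)) k"
  proof (cases "k \<le> degree f")
    case True
    then have e: "(-1::complex) ^ (degree f - k) = (if even (degree f) then (-1)^k else - ((-1)^k))"
      by (auto simp: minus_one_power_iff)
    show ?thesis using True e
      by (auto simp: coeff_tilde coeff_dagger degree_tilde)
  qed (auto simp: coeff_tilde coeff_dagger degree_tilde)
qed

lemma Pl_minus: "f \<in> Pl l \<Longrightarrow> - f \<in> Pl l"
  by (simp add: Pl_def)
lemma Pl_tilde: "f \<in> Pl l \<Longrightarrow> tilde f \<in> Pl l"
  by (simp add: Pl_def degree_tilde coeff_tilde)
lemma Pl_dagger: "f \<in> Pl l \<Longrightarrow> dagger f \<in> Pl l"
  by (simp add: Pl_def degree_dagger dagger_coeff0)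

lemma cmod_dagger: assumes "cmod z = 1" shows "cmod (poly (dagger g) z) = cmod (poly g z)"
proof -
  have z0: "cnj z \<noteq> 0" using assms by auto
  have zz: "cnj z * z = 1" using assms complex_norm_square[of z] by (simp add: mult.commute)
  have inv: "inverse (cnj z) = z" using inverse_unique[OF zz] .
  have "poly (dagger g) z = cnj (cnj z ^ degree g * poly g z)"
    unfolding dagger_def using poly_reflect_poly_nz[OF z0, of g] inv by simp
  then show ?thesis using assms by (simp add: norm_mult norm_power)
qed



lemma lp_norm_cong: "(\<And>\<theta>. cmod (poly a (cis \<theta>)) = cmod (poly b (cis \<theta>))) \<Longrightarrow> lp_norm p a = lp_norm p b"
  unfolding lp_norm_def by simp

lemma integral_shift_pi:
  fixes g :: "real \<Rightarrow> real"
  assumes c: "continuous_on UNIV g" and per: "\<And>x. g (x + 2*pi) = g x"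
  shows "integral {0..2*pi} (\<lambda>x. g (x+pi)) = integral {0..2*pi} g"
proof -
  have int: "g integrable_on {a..b}" for a b
    by (rule integrable_continuous_real) (use c continuous_on_subset in blast)
  have 1: "integral {0..2*pi} (\<lambda>x. g (x+pi)) = integral {pi..3*pi} g"
    using integral_shift_real_ivl[of pi pi "3*pi" g] by simp
  have 2: "integral {pi..2*pi} g + integral {2*pi..3*pi} g = integral {pi..3*pi} g"
    by (rule Henstock_Kurzweil_Integration.integral_combine) (use int pi_gt_zero in auto)
  have 3: "integral {2*pi..3*pi} g = integral {0..pi} g"
  proof -
    have "integral {2*pi..3*pi} g = integral {2*pi - 2*pi..3*pi-2*pi} (\<lambda>x. g (x + 2*pi))"
      using integral_shift_real_ivl[of "2*pi" "2*pi" "3*pi" g] by simp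
    also have "\<dots> = integral {0..pi} g" using per by simp
    finally show ?thesis .
  qed
  have 4: "integral {0..pi} g + integral {pi..2*pi} g = integral {0..2*pi} g"
    by (rule Henstock_Kurzweil_Integration.integral_combine) (use int pi_gt_zero in auto)
  show ?thesis using 1 2 3 4 by simp
qed

lemma lp_norm_tilde: assumes "p > 0" shows "lp_norm p (tilde a) = lp_norm p a"
proof -
  define g where "g = (\<lambda>\<theta>. cmod (poly a (cis \<theta>)) powr p)"
  have c: "continuous_on UNIV g" unfolding g_def
    by (intro continuous_on_powr' continuous_intros) (use assms in auto)
  have per: "g (x + 2*pi) = g x" for x
    unfolding g_def by (simp add: cis_mult[symmetric])
  have sh: "(\<lambda>\<theta>. cmod (poly (tilde a) (cis \<theta>)) powr p) = (\<lambda>x. g (x + pi))"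
    unfolding g_def by (auto simp: poly_tilde cis_mult[symmetric])
  show ?thesis unfolding lp_norm_def sh integral_shift_pi[OF c per]
    by (simp add: g_def)
qed

lemma lp_norm_minus: "lp_norm p (- a) = lp_norm p a"
  by (rule lp_norm_cong) simp

lemma lp_norm_dagger: "lp_norm p (dagger a) = lp_norm p a"
  by (rule lp_norm_cong) (simp add: cmod_dagger)

lemma lp_norm_dagger_prod: "lp_norm p (dagger a * tilde (dagger a)) = lp_norm p (a * tilde a)"
proof (rule lp_norm_cong)
  fix t
  have "cmod (- cis t) = 1" by simp
  then show "cmod (poly (dagger a * tilde (dagger a)) (cis t)) = cmod (poly (a * tilde a) (cis t))"
    by (simp add: poly_tilde norm_mult cmod_dagger)
qed



lemma (in group) invol_generate:
  assumes a: "a \<in> carrier G" and aa: "a \<otimes> a = \<one>"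
  shows "generate G {a} = {\<one>, a}"
proof
  show "{\<one>, a} \<subseteq> generate G {a}" by (auto intro: generate.one generate.incl)
  have ia: "inv a = a" using inv_equality[OF aa a a] .
  have "subgroup {\<one>, a} G"
    by (rule subgroup.intro) (use a aa ia in auto)
  then show "generate G {a} \<subseteq> {\<one>, a}"
    by (intro generate_subgroup_incl) auto
qed

lemma (in group) centralizer_subgroup:
  assumes U: "U \<subseteq> carrier G"
  shows "subgroup {x \<in> carrier G. \<forall>y\<in>U. x \<otimes> y = y \<otimes> x} G"
proof (rule subgroup.intro)
  fix x z assume x: "x \<in> {x \<in> carrier G. \<forall>y\<in>U. x \<otimes> y = y \<otimes> x}"
    and z: "z \<in> {x \<in> carrier G. \<forall>y\<in>U. x \<otimes> y = y \<otimes> x}"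
  show "x \<otimes> z \<in> {x \<in> carrier G. \<forall>y\<in>U. x \<otimes> y = y \<otimes> x}"
  proof (intro CollectI conjI ballI)
    show "x \<otimes> z \<in> carrier G" using x z by auto
    fix y assume y: "y \<in> U"
    then have yc: "y \<in> carrier G" using U by auto
    have "x \<otimes> z \<otimes> y = x \<otimes> (y \<otimes> z)" using x z y yc by (simp add: m_assoc)
    also have "\<dots> = (x \<otimes> y) \<otimes> z" using x z yc by (simp add: m_assoc)
    also have "\<dots> = y \<otimes> (x \<otimes> z)" using x z y yc by (simp add: m_assoc)
    finally show "x \<otimes> z \<otimes> y = y \<otimes> (x \<otimes> z)" .
  qed
next
  fix x assume x: "x \<in> {x \<in> carrier G. \<forall>y\<in>U. x \<otimes> y = y \<otimes> x}"
  show "inv x \<in> {x \<in> carrier G. \<forall>y\<in>U. x \<otimes> y = y \<otimes> x}"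
  proof (intro CollectI conjI ballI)
    show "inv x \<in> carrier G" using x by auto
    fix y assume y: "y \<in> U"
    then have yc: "y \<in> carrier G" using U by auto
    have xc: "x \<in> carrier G" and e: "x \<otimes> y = y \<otimes> x" using x y by auto
    have "inv x \<otimes> y = inv x \<otimes> (y \<otimes> x) \<otimes> inv x" using xc yc by (simp add: m_assoc)
    also have "\<dots> = inv x \<otimes> (x \<otimes> y) \<otimes> inv x" using e by simp
    also have "\<dots> = y \<otimes> inv x" using xc yc by (simp add: m_assoc[symmetric])
    finally show "inv x \<otimes> y = y \<otimes> inv x" .
  qed
qed (use U in auto)

lemma (in group) comm_from_gens:
  assumes gen: "\<And>T. subgroup T G \<Longrightarrow> S \<subseteq> T \<Longrightarrow> carrier G \<subseteq> T"
    and S: "S \<subseteq> carrier G" and comm: "\<And>x y. x \<in> S \<Longrightarrow> y \<in> S \<Longrightarrow> x \<otimes> y = y \<otimes> x"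
  shows "comm_group G"
proof -
  have 1: "carrier G \<subseteq> {x \<in> carrier G. \<forall>y\<in>S. x \<otimes> y = y \<otimes> x}"
    by (rule gen[OF centralizer_subgroup[OF S]]) (use S comm in auto)
  have 2: "carrier G \<subseteq> {x \<in> carrier G. \<forall>y\<in>carrier G. x \<otimes> y = y \<otimes> x}"
    by (rule gen[OF centralizer_subgroup]) (use S 1 in force)+
  show ?thesis
    by (rule group_comm_groupI) (use 2 in auto)
qed

lemma (in comm_group) subgroups_prod_subgroup:
  "\<forall>H\<in>set Hs. subgroup H G \<Longrightarrow> subgroup (subgroups_prod G Hs) G"
proof (induction Hs)
  case Nil
  then show ?case by (simp add: subgroups_prod_def triv_subgroup)
next
  case (Cons H Hs)
  then show ?case by (simp add: subgroups_prod_def mult_subgroups)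
qed

lemma (in comm_group) subgroups_prod_mem:
  "\<forall>H\<in>set Hs. subgroup H G \<Longrightarrow> H \<in> set Hs \<Longrightarrow> x \<in> H \<Longrightarrow> x \<in> subgroups_prod G Hs"
proof (induction Hs)
  case Nil
  then show ?case by simp
next
  case (Cons K Hs)
  have P: "subgroup (subgroups_prod G Hs) G" using Cons.prems(1) by (intro subgroups_prod_subgroup) auto
  have eq: "subgroups_prod G (K # Hs) = K <#> subgroups_prod G Hs" by (simp add: subgroups_prod_def)
  show ?case
  proof (cases "H = K")
    case True
    then have "x \<in> carrier G" using Cons.prems subgroup.subset by force
    then have "x = x \<otimes> \<one>" by simp
    then show ?thesis unfolding eq set_mult_def using True Cons.prems subgroup.one_closed[OF P] by blast
  next
    case False
    then have xP: "x \<in> subgroups_prod G Hs" using Cons by auto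
    then have "x \<in> carrier G" using subgroup.subset[OF P] by auto
    then have "x = \<one> \<otimes> x" by simp
    then show ?thesis unfolding eq set_mult_def using xP Cons.prems subgroup.one_closed by force
  qed
qed



lemma d8_arith:
  assumes "a \<in> {0..3}" "b \<in> {0..3}" "s \<in> {0..1}" "t \<in> {0..1::int}"
  shows "nat (fst (d8_mult (a,s) (b,t))) = (nat a + (if nat s = 0 then nat b else 3 * nat b)) mod 4"
    and "nat (snd (d8_mult (a,s) (b,t))) = (nat s + nat t) mod 2"
proof -
  have a: "a = 0 \<or> a = 1 \<or> a = 2 \<or> a = 3" and b: "b = 0 \<or> b = 1 \<or> b = 2 \<or> b = 3"
    and s: "s = 0 \<or> s = 1" and t: "t = 0 \<or> t = 1" using assms by auto
  show "nat (fst (d8_mult (a,s) (b,t))) = (nat a + (if nat s = 0 then nat b else 3 * nat b)) mod 4"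
    using a b s by (elim disjE) (simp_all add: d8_mult_def)
  show "nat (snd (d8_mult (a,s) (b,t))) = (nat s + nat t) mod 2"
    using s t by (elim disjE) (simp_all add: d8_mult_def)
qed

lemma d8_closed: "d8_mult p q \<in> {0..3} \<times> {0..1}"
  by (auto simp: d8_mult_def)

lemma (in group) dihedral_iso:
  assumes x: "x \<in> carrier G" and h: "h \<in> carrier G"
    and hh: "h \<otimes> h = \<one>" and x4: "x [^] (4::nat) = \<one>" and x2: "x [^] (2::nat) \<noteq> \<one>"
    and hx: "h \<otimes> x = x [^] (3::nat) \<otimes> h"
    and hne: "\<And>k::nat. k < 4 \<Longrightarrow> h \<noteq> x [^] k"
    and gen: "\<And>T. \<one> \<in> T \<Longrightarrow> x \<in> T \<Longrightarrow> h \<in> T \<Longrightarrow> (\<And>u v. u \<in> T \<Longrightarrow> v \<in> T \<Longrightarrow> u \<otimes> v \<in> T) \<Longrightarrow> carrier G \<subseteq> T"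
  shows "G \<cong> dihedral8"
proof -
  have xmod: "x [^] (m::nat) = x [^] (m mod 4)" for m
  proof -
    have "x [^] (4 * (m div 4)) \<otimes> x [^] (m mod 4) = x [^] (4 * (m div 4) + m mod 4)"
      by (rule nat_pow_mult[OF x])
    also have "4 * (m div 4) + m mod 4 = m" by simp
    also have "x [^] (4 * (m div 4)) = (x [^] (4::nat)) [^] (m div 4)" by (metis nat_pow_pow x)
    finally show ?thesis using x4 x by simp
  qed
  have h2: "h [^] (2::nat) = \<one>" using hh h by (simp add: numeral_2_eq_2)
  have hmod: "h [^] (m::nat) = h [^] (m mod 2)" for m
  proof -
    have "h [^] (2 * (m div 2)) \<otimes> h [^] (m mod 2) = h [^] (2 * (m div 2) + m mod 2)"
      by (rule nat_pow_mult[OF h])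
    also have "2 * (m div 2) + m mod 2 = m" by simp
    also have "h [^] (2 * (m div 2)) = (h [^] (2::nat)) [^] (m div 2)" by (metis nat_pow_pow h)
    finally show ?thesis using h2 h by simp
  qed
  have hxm: "h \<otimes> x [^] (m::nat) = x [^] (3 * m) \<otimes> h" for m
  proof (induction m)
    case 0 then show ?case using h by simp
  next
    case (Suc m)
    have "h \<otimes> x [^] Suc m = (h \<otimes> x [^] m) \<otimes> x" using x h by (simp add: m_assoc)
    also have "\<dots> = x [^] (3 * m) \<otimes> (h \<otimes> x)" using Suc x h by (simp add: m_assoc)
    also have "\<dots> = (x [^] (3 * m) \<otimes> x [^] (3::nat)) \<otimes> h" using hx x h by (simp add: m_assoc)
    also have "\<dots> = x [^] (3 * Suc m) \<otimes> h" using x by (simp add: nat_pow_mult add.commute)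
    finally show ?case .
  qed
  have x1: "x \<noteq> \<one>" using x2 by (auto simp: numeral_2_eq_2)
  have xk: "k = 0" if "k < 4" "x [^] (k::nat) = \<one>" for k
  proof -
    have "k = 0 \<or> k = 1 \<or> k = 2 \<or> k = 3" using that by auto
    moreover have "k \<noteq> 1"
    proof
      assume "k = 1"
      then have "x [^] (1::nat) = \<one>" using that by simp
      then show False using x x1 by simp
    qed
    moreover have "k \<noteq> 2" using that x2 by auto
    moreover have "k \<noteq> 3"
    proof
      assume k3: "k = 3"
      have e3: "x [^] (3::nat) = \<one>" using that k3 by simp
      have "x [^] (4::nat) = x [^] (Suc 3)" by simp
      also have "\<dots> = x [^] (3::nat) \<otimes> x" by (rule nat_pow_Suc)
      finally have "\<one> = \<one> \<otimes> x" using x4 e3 by simp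
      then show False using x1 x by simp
    qed
    ultimately show ?thesis by auto
  qed
  have xinj: "A = B" if "A < 4" "B < 4" "x [^] (A::nat) = x [^] (B::nat)" for A B
  proof -
    have "x [^] (A + (4 - B)) = x [^] A \<otimes> x [^] (4 - B)" by (rule nat_pow_mult[OF x, symmetric])
    also have "\<dots> = x [^] B \<otimes> x [^] (4 - B)" using that by simp
    also have "\<dots> = x [^] (B + (4 - B))" by (rule nat_pow_mult[OF x])
    also have "B + (4 - B) = 4" using that by simp
    also have "x [^] (4::nat) = \<one>" by (rule x4)
    finally have "x [^] ((A + (4 - B)) mod 4) = \<one>" using xmod by metis
    then have "(A + (4 - B)) mod 4 = 0" using xk by simp
    then show ?thesis using that by presburger
  qed
  define D where "D = carrier dihedral8"
  have D: "D = {0..3} \<times> {0..1}" by (simp add: D_def dihedral8_def)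
  define \<phi> where "\<phi> p = x [^] nat (fst p) \<otimes> h [^] nat (snd p)" for p :: "int \<times> int"
  have \<phi>c: "\<phi> p \<in> carrier G" for p using x h by (simp add: \<phi>_def)
  have hom: "\<phi> p \<otimes> \<phi> q = \<phi> (d8_mult p q)" if "p \<in> D" "q \<in> D" for p q
  proof -
    obtain a s b t where p: "p = (a,s)" and q: "q = (b,t)" by (cases p, cases q) auto
    have ab: "a \<in> {0..3}" "b \<in> {0..3}" "s \<in> {0..1}" "t \<in> {0..1}" using that p q D by auto
    have grp: "\<phi> p \<otimes> \<phi> q = x [^] (nat a + (if nat s = 0 then nat b else 3 * nat b)) \<otimes> h [^] (nat s + nat t)"
    proof (cases "nat s = 0")
      case True
      then show ?thesis using x h unfolding \<phi>_def p q
        by (simp add: m_assoc[symmetric] nat_pow_mult[symmetric])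
    next
      case False
      then have s1: "nat s = 1" using ab by auto
      have "\<phi> p \<otimes> \<phi> q = x [^] nat a \<otimes> (h \<otimes> x [^] nat b) \<otimes> h [^] nat t"
        using x h s1 unfolding \<phi>_def p q by (simp add: m_assoc)
      also have "\<dots> = x [^] nat a \<otimes> x [^] (3 * nat b) \<otimes> (h \<otimes> h [^] nat t)"
        using x h by (simp add: hxm m_assoc)
      also have "\<dots> = x [^] (nat a + 3 * nat b) \<otimes> h [^] (1 + nat t)"
        using x h nat_pow_Suc2[of h "nat t", symmetric] by (simp add: nat_pow_mult[symmetric] del: nat_pow_Suc2)
      finally show ?thesis using s1 by simp
    qed
    define E where "E = nat a + (if nat s = 0 then nat b else 3 * nat b)"
    define F where "F = nat s + nat t"
    have r: "\<phi> (d8_mult p q) = x [^] (E mod 4) \<otimes> h [^] (F mod 2)"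
      unfolding \<phi>_def p q d8_arith[OF ab] E_def F_def by (rule refl)
    show ?thesis using grp r xmod[of E] hmod[of F] unfolding E_def F_def by simp
  qed
  have inj: "inj_on \<phi> D"
  proof (rule inj_onI)
    fix p q assume pD: "p \<in> D" and qD: "q \<in> D" and e: "\<phi> p = \<phi> q"
    obtain a s b t where p: "p = (a,s)" and q: "q = (b,t)" by (cases p, cases q) auto
    have ab: "a \<in> {0..3}" "b \<in> {0..3}" "s \<in> {0..1}" "t \<in> {0..1}" using pD qD p q D by auto
    have A4: "nat a < 4" "nat b < 4" using ab by auto
    have e': "x [^] nat a \<otimes> h [^] nat s = x [^] nat b \<otimes> h [^] nat t" using e p q by (simp add: \<phi>_def)
    have st: "s = t"
    proof (rule ccontr)
      assume "s \<noteq> t"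
      then have "(s = 0 \<and> t = 1) \<or> (s = 1 \<and> t = 0)" using ab by auto
      then obtain A B where AB: "A < 4" "B < 4" "x [^] (A::nat) = x [^] (B::nat) \<otimes> h"
        using e' A4 x h by auto
      have "x [^] (4 - B) \<otimes> x [^] A = x [^] (4 - B) \<otimes> (x [^] B \<otimes> h)" using AB by simp
      also have "\<dots> = (x [^] (4 - B) \<otimes> x [^] B) \<otimes> h" using x h by (simp add: m_assoc)
      also have "x [^] (4 - B) \<otimes> x [^] B = x [^] (4 - B + B)" by (rule nat_pow_mult[OF x])
      also have "4 - B + B = 4" using AB by simp
      also have "x [^] (4::nat) = \<one>" by (rule x4)
      finally have e1: "x [^] (4 - B) \<otimes> x [^] A = h" using h by simp
      have "x [^] (4 - B) \<otimes> x [^] A = x [^] (4 - B + A)" by (rule nat_pow_mult[OF x])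
      also have "\<dots> = x [^] ((4 - B + A) mod 4)" by (rule xmod)
      finally have "x [^] ((4 - B + A) mod 4) = h" using e1 by simp
      then show False using hne[of "(4 - B + A) mod 4"] by simp
    qed
    then have "x [^] nat a = x [^] nat b" using e' x h by simp
    then have "nat a = nat b" using xinj A4 by blast
    then show "p = q" using p q st ab by auto
  qed
  have surj: "carrier G \<subseteq> \<phi> ` D"
  proof (rule gen)
    show "\<one> \<in> \<phi> ` D" by (rule image_eqI[of _ _ "(0,0)"]) (auto simp: \<phi>_def D)
    show "x \<in> \<phi> ` D" by (rule image_eqI[of _ _ "(1,0)"]) (use x in \<open>auto simp: \<phi>_def D\<close>)
    show "h \<in> \<phi> ` D" by (rule image_eqI[of _ _ "(0,1)"]) (use h in \<open>auto simp: \<phi>_def D\<close>)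
    fix u v assume "u \<in> \<phi> ` D" "v \<in> \<phi> ` D"
    then obtain p q where "p \<in> D" "q \<in> D" "u = \<phi> p" "v = \<phi> q" by auto
    then show "u \<otimes> v \<in> \<phi> ` D" using hom d8_closed D by auto
  qed
  have bij: "bij_betw \<phi> D (carrier G)"
    using inj surj \<phi>c by (auto simp: bij_betw_def)
  define \<psi> where "\<psi> = inv_into D \<phi>"
  have bij2: "bij_betw \<psi> (carrier G) D" unfolding \<psi>_def by (rule bij_betw_inv_into[OF bij])
  have "\<psi> \<in> iso G dihedral8"
  proof (rule isoI)
    show "bij_betw \<psi> (carrier G) (carrier dihedral8)" using bij2 D_def by simp
    show "\<psi> \<in> hom G dihedral8"
    proof (rule homI)
      fix u assume "u \<in> carrier G" then show "\<psi> u \<in> carrier dihedral8"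
        using bij2 D_def bij_betwE by blast
    next
      fix u v assume u: "u \<in> carrier G" and v: "v \<in> carrier G"
      have pu: "\<psi> u \<in> D" "\<phi> (\<psi> u) = u" using u bij surj unfolding \<psi>_def
        by (auto intro: inv_into_into f_inv_into_f)
      have pv: "\<psi> v \<in> D" "\<phi> (\<psi> v) = v" using v bij surj unfolding \<psi>_def
        by (auto intro: inv_into_into f_inv_into_f)
      have "u \<otimes> v = \<phi> (d8_mult (\<psi> u) (\<psi> v))" using hom[OF pu(1) pv(1)] pu pv by simp
      then have "\<psi> (u \<otimes> v) = d8_mult (\<psi> u) (\<psi> v)"
        unfolding \<psi>_def using inv_into_f_f[OF inj] d8_closed D by auto
      then show "\<psi> (u \<otimes> v) = \<psi> u \<otimes>\<^bsub>dihedral8\<^esub> \<psi> v" by (simp add: dihedral8_def)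
    qed
  qed
  then show ?thesis by (rule is_isoI)
qed



lemma invol_Bij:
  assumes "\<And>f. f \<in> S \<Longrightarrow> g f \<in> S" "\<And>f. f \<in> S \<Longrightarrow> g (g f) = f"
  shows "restrict g S \<in> Bij S"
  unfolding Bij_def using assms
  by (auto intro!: bij_betw_byWitness[where f'=g])

lemma Pl_c0: "f \<in> Pl l \<Longrightarrow> coeff f 0 \<noteq> 0" by (simp add: Pl_def)

lemma n_Bij: "n_map l \<in> Bij (Pl l)"
  unfolding n_map_def by (rule invol_Bij) (auto simp: Pl_minus)
lemma h_Bij: "h_map l \<in> Bij (Pl l)"
  unfolding h_map_def by (rule invol_Bij) (auto simp: Pl_tilde tilde_tilde)
lemma r_Bij: "r_map l \<in> Bij (Pl l)"
  unfolding r_map_def by (rule invol_Bij) (auto simp: Pl_dagger dagger_dagger Pl_c0)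

lemma n_val [simp]: "f \<in> Pl l \<Longrightarrow> n_map l f = - f" by (simp add: n_map_def)
lemma h_val [simp]: "f \<in> Pl l \<Longrightarrow> h_map l f = tilde f" by (simp add: h_map_def)
lemma r_val [simp]: "f \<in> Pl l \<Longrightarrow> r_map l f = dagger f" by (simp add: r_map_def)

lemma Bij_eq: "u \<in> Bij S \<Longrightarrow> v \<in> Bij S \<Longrightarrow> (\<And>f. f \<in> S \<Longrightarrow> u f = v f) \<Longrightarrow> u = v"
  by (rule extensionalityI[of _ S]) (auto simp: Bij_def)

lemma Bij_into: "u \<in> Bij S \<Longrightarrow> f \<in> S \<Longrightarrow> u f \<in> S"
  using Bij_imp_funcset by blast

lemma K_mult [simp]: "u \<in> Bij (Pl l) \<Longrightarrow> v \<in> Bij (Pl l) \<Longrightarrow> u \<otimes>\<^bsub>G_grp l\<^esub> v = compose (Pl l) u v"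
  by (simp add: G_grp_def BijGroup_def)

lemma B_mult: "u \<in> Bij (Pl l) \<Longrightarrow> v \<in> Bij (Pl l) \<Longrightarrow> u \<otimes>\<^bsub>BijGroup (Pl l)\<^esub> v = compose (Pl l) u v"
  by (simp add: BijGroup_def)

lemma K_one: "\<one>\<^bsub>G_grp l\<^esub> = (\<lambda>x\<in>Pl l. x)"
  by (simp add: G_grp_def BijGroup_def)

lemma K_group: "group (G_grp l)"
  unfolding G_grp_def by (rule group.group_subgroup_generated[OF group_BijGroup])

lemma gens_Bij: "{n_map l, h_map l, r_map l} \<subseteq> Bij (Pl l)"
  using n_Bij h_Bij r_Bij by auto

lemma K_carrier: "carrier (G_grp l) = generate (BijGroup (Pl l)) {n_map l, h_map l, r_map l}"
  unfolding G_grp_def carrier_subgroup_generated using gens_Bij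
  by (simp add: BijGroup_def Int_absorb1)

lemma K_sub: "carrier (G_grp l) \<subseteq> Bij (Pl l)"
  unfolding K_carrier using group.generate_incl[OF group_BijGroup, of "{n_map l, h_map l, r_map l}" "Pl l"] gens_Bij
  by (simp add: BijGroup_def)

lemma gens_K: "n_map l \<in> carrier (G_grp l)" "h_map l \<in> carrier (G_grp l)" "r_map l \<in> carrier (G_grp l)"
  unfolding K_carrier by (auto intro: generate.incl)

lemma gen_invol: assumes "g \<in> {n_map l, h_map l, r_map l}"
  shows "g \<otimes>\<^bsub>G_grp l\<^esub> g = \<one>\<^bsub>G_grp l\<^esub>"
proof -
  have gB: "g \<in> Bij (Pl l)" using assms gens_Bij by auto
  show ?thesis
    using assms
    by (auto simp: K_one gB compose_Bij id_Bij n_Bij h_Bij r_Bij compose_eq Pl_minus Pl_tilde Pl_dagger tilde_tilde dagger_dagger Pl_c0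
        intro!: Bij_eq[of _ "Pl l"] compose_Bij)
qed

lemma K_gen:
  assumes one0: "\<one>\<^bsub>G_grp l\<^esub> \<in> T" and n: "n_map l \<in> T" and h: "h_map l \<in> T" and r: "r_map l \<in> T"
    and cl: "\<And>u v. u \<in> T \<Longrightarrow> v \<in> T \<Longrightarrow> u \<otimes>\<^bsub>G_grp l\<^esub> v \<in> T"
  shows "carrier (G_grp l) \<subseteq> T"
proof
  fix g assume "g \<in> carrier (G_grp l)"
  then have "g \<in> generate (BijGroup (Pl l)) {n_map l, h_map l, r_map l}" by (simp add: K_carrier)
  then show "g \<in> T"
  proof (induction rule: generate.induct)
    case one
    then show ?case using one0 by (simp add: G_grp_def)
  next
    case (incl x)
    then show ?case using n h r by auto
  next
    case (inv x)
    have xB: "x \<in> carrier (BijGroup (Pl l))" using inv gens_Bij by (auto simp: BijGroup_def)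
    have "x \<otimes>\<^bsub>BijGroup (Pl l)\<^esub> x = \<one>\<^bsub>BijGroup (Pl l)\<^esub>"
      using gen_invol[OF inv] by (simp add: G_grp_def)
    then have "inv\<^bsub>BijGroup (Pl l)\<^esub> x = x"
      using group.inv_equality[OF group_BijGroup _ xB xB] by blast
    then show ?case using inv n h r by auto
  next
    case (eng h1 h2)
    then show ?case using cl by (simp add: G_grp_def)
  qed
qed



lemmas ev_simps = K_mult compose_Bij n_Bij h_Bij r_Bij compose_eq Pl_minus Pl_tilde Pl_dagger Bij_into

lemma Pl_deg: "f \<in> Pl l \<Longrightarrow> degree f = l - 1" by (simp add: Pl_def)

lemma nh_comm: "n_map l \<otimes>\<^bsub>G_grp l\<^esub> h_map l = h_map l \<otimes>\<^bsub>G_grp l\<^esub> n_map l"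
  by (rule Bij_eq[of _ "Pl l"]) (auto simp: ev_simps tilde_minus)

lemma nr_comm: "n_map l \<otimes>\<^bsub>G_grp l\<^esub> r_map l = r_map l \<otimes>\<^bsub>G_grp l\<^esub> n_map l"
  by (rule Bij_eq[of _ "Pl l"]) (auto simp: ev_simps dagger_minus)

lemma hr_comm: assumes "odd l"
  shows "h_map l \<otimes>\<^bsub>G_grp l\<^esub> r_map l = r_map l \<otimes>\<^bsub>G_grp l\<^esub> h_map l"
proof (rule Bij_eq[of _ "Pl l"])
  fix f assume f: "f \<in> Pl l"
  have "tilde (dagger f) = dagger (tilde f)" using tilde_dagger[OF Pl_c0[OF f]] Pl_deg[OF f] assms
    by (cases l) auto
  then show "(h_map l \<otimes>\<^bsub>G_grp l\<^esub> r_map l) f = (r_map l \<otimes>\<^bsub>G_grp l\<^esub> h_map l) f"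
    using f by (simp add: ev_simps)
qed (auto simp: ev_simps)

lemma tilde_dagger_odd: assumes "even l" "f \<in> Pl l" "l \<ge> 1" shows "tilde (dagger f) = - dagger (tilde f)"
  using tilde_dagger[OF Pl_c0[OF assms(2)]] Pl_deg[OF assms(2)] assms
  by (cases l) auto

lemma rh_sq: assumes "even l" and l1: "l \<ge> 1"
  shows "(r_map l \<otimes>\<^bsub>G_grp l\<^esub> h_map l) \<otimes>\<^bsub>G_grp l\<^esub> (r_map l \<otimes>\<^bsub>G_grp l\<^esub> h_map l) = n_map l"
proof (rule Bij_eq[of _ "Pl l"])
  fix f assume f: "f \<in> Pl l"
  have t: "tilde f \<in> Pl l" using f by (rule Pl_tilde)
  have "dagger (tilde (dagger (tilde f))) = - f"
    using tilde_dagger_odd[OF assms(1) t l1] dagger_minus dagger_dagger[OF Pl_c0[OF f]] tilde_tilde by simp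
  then show "((r_map l \<otimes>\<^bsub>G_grp l\<^esub> h_map l) \<otimes>\<^bsub>G_grp l\<^esub> (r_map l \<otimes>\<^bsub>G_grp l\<^esub> h_map l)) f = n_map l f"
    using f t by (simp add: ev_simps)
qed (auto simp: ev_simps)

lemma h_rh: assumes "even l" and l1: "l \<ge> 1"
  shows "h_map l \<otimes>\<^bsub>G_grp l\<^esub> (r_map l \<otimes>\<^bsub>G_grp l\<^esub> h_map l) = n_map l \<otimes>\<^bsub>G_grp l\<^esub> r_map l"
proof (rule Bij_eq[of _ "Pl l"])
  fix f assume f: "f \<in> Pl l"
  have t: "tilde f \<in> Pl l" using f by (rule Pl_tilde)
  have "tilde (dagger (tilde f)) = - dagger f"
    using tilde_dagger_odd[OF assms(1) t l1] tilde_tilde by simp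
  then show "(h_map l \<otimes>\<^bsub>G_grp l\<^esub> (r_map l \<otimes>\<^bsub>G_grp l\<^esub> h_map l)) f = (n_map l \<otimes>\<^bsub>G_grp l\<^esub> r_map l) f"
    using f t by (simp add: ev_simps)
qed (auto simp: ev_simps)

definition wit :: "nat \<Rightarrow> complex \<Rightarrow> complex poly" where
  "wit l c = [:c:] + monom 1 (l - 1)"

lemma wit_props: assumes "l \<ge> 2" "c \<noteq> 0"
  shows "wit l c \<in> Pl l" "coeff (wit l c) 0 = c" "degree (wit l c) = l - 1" "coeff (wit l c) (l - 1) = 1"
proof -
  have d: "degree (wit l c) = l - 1" unfolding wit_def
    using assms by (subst degree_add_eq_right) (auto simp: degree_monom_eq)
  show "coeff (wit l c) 0 = c" "coeff (wit l c) (l - 1) = 1" using assms by (auto simp: wit_def coeff_monom coeff_pCons split: nat.split)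
  then show "wit l c \<in> Pl l" using d assms by (simp add: Pl_def)
  show "degree (wit l c) = l - 1" by (rule d)
qed

lemma K_one_val: "f \<in> Pl l \<Longrightarrow> \<one>\<^bsub>G_grp l\<^esub> f = f" by (simp add: K_one)

lemma neqI: "(\<And>f. u f \<noteq> v f) \<Longrightarrow> u \<noteq> v" by auto



lemma norm_inv:
  assumes t: "t \<in> carrier (G_grp l)"
  shows "\<forall>f \<in> Pl l. \<forall>p::real. p \<ge> 1 \<longrightarrow>
          lp_norm p (t f) = lp_norm p f \<and> lp_norm p (t f * tilde (t f)) = lp_norm p (f * tilde f)"
proof -
  define T where "T = {t \<in> Bij (Pl l). \<forall>f \<in> Pl l. \<forall>p::real. p \<ge> 1 \<longrightarrow>
          lp_norm p (t f) = lp_norm p f \<and> lp_norm p (t f * tilde (t f)) = lp_norm p (f * tilde f)}"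
  have "carrier (G_grp l) \<subseteq> T"
  proof (rule K_gen)
    show "\<one>\<^bsub>G_grp l\<^esub> \<in> T" unfolding T_def by (simp add: K_one id_Bij)
    show "n_map l \<in> T" unfolding T_def by (simp add: n_Bij lp_norm_minus tilde_minus)
    show "h_map l \<in> T" unfolding T_def by (simp add: h_Bij lp_norm_tilde tilde_tilde mult.commute)
    show "r_map l \<in> T" unfolding T_def by (simp add: r_Bij lp_norm_dagger lp_norm_dagger_prod)
    fix u v assume "u \<in> T" "v \<in> T"
    then show "u \<otimes>\<^bsub>G_grp l\<^esub> v \<in> T" unfolding T_def
      by (auto simp: compose_Bij compose_eq Bij_into)
  qed
  then show ?thesis using t unfolding T_def by blast
qed



lemma (in group) pow2: "x \<in> carrier G \<Longrightarrow> x [^] (2::nat) = x \<otimes> x"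
  by (simp add: numeral_2_eq_2)
lemma (in group) pow3: "x \<in> carrier G \<Longrightarrow> x [^] (3::nat) = x \<otimes> x \<otimes> x"
  by (simp add: numeral_3_eq_3)
lemma (in group) pow4: "x \<in> carrier G \<Longrightarrow> x [^] (4::nat) = (x \<otimes> x) \<otimes> (x \<otimes> x)"
proof -
  assume x: "x \<in> carrier G"
  have "x [^] (4::nat) = x [^] (2::nat) \<otimes> x [^] (2::nat)" using nat_pow_mult[OF x, of 2 2] by simp
  then show ?thesis using pow2[OF x] by simp
qed

lemma (in group) ord2: assumes "a \<in> carrier G" "a \<otimes> a = \<one>" "a \<noteq> \<one>" shows "ord a = 2"
proof -
  have "ord a dvd 2" using pow_eq_id[OF assms(1), of 2] pow2[OF assms(1)] assms(2) by simp
  moreover have "ord a \<noteq> 1" using ord_eq_1[OF assms(1)] assms(3) by simp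
  moreover have "ord a \<noteq> 0" using \<open>ord a dvd 2\<close> by (rule_tac notI) simp
  ultimately have "ord a \<le> 2" "ord a \<noteq> 0" "ord a \<noteq> 1" by (auto dest: dvd_imp_le)
  then show ?thesis by auto
qed

lemma (in group) ord4: assumes x: "x \<in> carrier G" and "x [^] (4::nat) = \<one>" "x [^] (2::nat) \<noteq> \<one>"
  shows "ord x = 4"
proof -
  have d: "ord x dvd 4" using pow_eq_id[OF x, of 4] assms by simp
  have "ord x \<noteq> 0" using d by (rule_tac notI) simp
  moreover have "ord x \<le> 4" using d by (auto dest: dvd_imp_le)
  ultimately have "ord x \<in> {1,2,3,4}" by auto
  moreover have "\<not> ord x dvd 2" using pow_eq_id[OF x, of 2] assms by simp
  moreover have "\<not> (3::nat) dvd 4" by simp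
  ultimately show ?thesis using d by auto
qed

lemma (in monoid) set_mult_one: "A \<subseteq> carrier G \<Longrightarrow> A <#> {\<one>} = A"
  unfolding set_mult_def by force

lemma (in monoid) set_mult_pairs: "a \<in> carrier G \<Longrightarrow> b \<in> carrier G \<Longrightarrow>
   {\<one>, a} <#> {\<one>, b} = {\<one>, b, a, a \<otimes> b}"
  unfolding set_mult_def by auto

lemma subgroups_prod_Cons: "subgroups_prod G (H # Hs) = H <#>\<^bsub>G\<^esub> subgroups_prod G Hs"
  by (simp add: subgroups_prod_def)
lemma subgroups_prod_Nil: "subgroups_prod G [] = {\<one>\<^bsub>G\<^esub>}"
  by (simp add: subgroups_prod_def)

lemma neq_via: "f \<in> Pl l \<Longrightarrow> coeff (u f) k \<noteq> coeff (v f) k \<Longrightarrow> u \<noteq> v" by auto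

lemma h1: "h_map 1 = \<one>\<^bsub>G_grp 1\<^esub>"
proof (rule Bij_eq[of _ "Pl 1"])
  fix f assume f: "f \<in> Pl 1"
  have "tilde f = f"
  proof (rule poly_eqI)
    fix k show "coeff (tilde f) k = coeff f k"
      using f by (cases k) (auto simp: coeff_tilde Pl_def coeff_eq_0)
  qed
  then show "h_map 1 f = \<one>\<^bsub>G_grp 1\<^esub> f" using f by (simp add: K_one)
qed (auto simp: h_Bij K_one id_Bij)



lemma odd_comm: assumes "odd l" shows "comm_group (G_grp l)"
proof -
  interpret K: group "G_grp l" by (rule K_group)
  show ?thesis
  proof (rule K.comm_from_gens[of "{n_map l, h_map l, r_map l}"])
    fix T assume T: "subgroup T (G_grp l)" "{n_map l, h_map l, r_map l} \<subseteq> T"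
    show "carrier (G_grp l) \<subseteq> T"
      by (rule K_gen) (use T in \<open>auto simp: subgroup.one_closed subgroup.m_closed\<close>)
  next
    show "{n_map l, h_map l, r_map l} \<subseteq> carrier (G_grp l)" using gens_K by auto
  next
    fix x y assume "x \<in> {n_map l, h_map l, r_map l}" "y \<in> {n_map l, h_map l, r_map l}"
    then show "x \<otimes>\<^bsub>G_grp l\<^esub> y = y \<otimes>\<^bsub>G_grp l\<^esub> x"
      using nh_comm nr_comm hr_comm[OF assms] by auto
  qed
qed

lemma prod_full:
  assumes "odd l" and Hs: "set Hs \<subseteq> (\<lambda>g. generate (G_grp l) {g}) ` {n_map l, h_map l, r_map l}"
    and cov: "\<And>g. g \<in> {n_map l, h_map l, r_map l} \<Longrightarrow> g = \<one>\<^bsub>G_grp l\<^esub> \<or> generate (G_grp l) {g} \<in> set Hs"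
  shows "subgroups_prod (G_grp l) Hs = carrier (G_grp l)"
proof -
  interpret K: comm_group "G_grp l" by (rule odd_comm[OF assms(1)])
  have sg: "\<forall>H\<in>set Hs. subgroup H (G_grp l)"
  proof
    fix H assume "H \<in> set Hs"
    then obtain g where g: "g \<in> {n_map l, h_map l, r_map l}" "H = generate (G_grp l) {g}" using Hs by auto
    then have "{g} \<subseteq> carrier (G_grp l)" using gens_K by auto
    then show "subgroup H (G_grp l)" using g K.generate_is_subgroup by simp
  qed
  have P: "subgroup (subgroups_prod (G_grp l) Hs) (G_grp l)" by (rule K.subgroups_prod_subgroup[OF sg])
  have mem: "g \<in> subgroups_prod (G_grp l) Hs" if "g \<in> {n_map l, h_map l, r_map l}" for g
  proof (cases "g = \<one>\<^bsub>G_grp l\<^esub>")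
    case True then show ?thesis using subgroup.one_closed[OF P] by simp
  next
    case False
    then have "generate (G_grp l) {g} \<in> set Hs" using cov[OF that] by auto
    then show ?thesis using K.subgroups_prod_mem[OF sg] generate.incl[of g "{g}"] by blast
  qed
  show ?thesis
  proof
    show "subgroups_prod (G_grp l) Hs \<subseteq> carrier (G_grp l)" using subgroup.subset[OF P] .
    show "carrier (G_grp l) \<subseteq> subgroups_prod (G_grp l) Hs"
      by (rule K_gen) (use mem subgroup.one_closed[OF P] subgroup.m_closed[OF P] in auto)
  qed
qed

lemma case_one: assumes l1: "l = 1" shows
  "internal_direct_product (G_grp l) [generate (G_grp l) {n_map l}, generate (G_grp l) {r_map l}]
   \<and> group.ord (G_grp l) (n_map l) = 2 \<and> group.ord (G_grp l) (r_map l) = 2"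
proof -
  interpret K: comm_group "G_grp l" by (rule odd_comm) (simp add: l1)
  have h1l: "h_map l = \<one>\<^bsub>G_grp l\<^esub>" using h1 l1 by simp
  have c1: "[:1:] \<in> Pl l" and ci: "[:\<i>:] \<in> Pl l" using l1 by (auto simp: Pl_def)
  have n1: "n_map l \<noteq> \<one>\<^bsub>G_grp l\<^esub>"
    by (rule neq_via[OF c1, of _ 0]) (simp add: K_one Pl_def l1)
  have r1: "r_map l \<noteq> \<one>\<^bsub>G_grp l\<^esub>"
    by (rule neq_via[OF ci, of _ 0]) (simp add: K_one Pl_def l1 coeff0_dagger)
  have nr: "n_map l \<noteq> r_map l"
    by (rule neq_via[OF c1, of _ 0]) (simp add: Pl_def l1 coeff0_dagger)
  have gn: "generate (G_grp l) {n_map l} = {\<one>\<^bsub>G_grp l\<^esub>, n_map l}"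
    by (rule K.invol_generate) (use gens_K gen_invol in auto)
  have gr: "generate (G_grp l) {r_map l} = {\<one>\<^bsub>G_grp l\<^esub>, r_map l}"
    by (rule K.invol_generate) (use gens_K gen_invol in auto)
  have full: "subgroups_prod (G_grp l) [generate (G_grp l) {n_map l}, generate (G_grp l) {r_map l}] = carrier (G_grp l)"
  proof (rule prod_full)
    show "odd l" using l1 by simp
  qed (auto simp: h1l)
  have normal: "H \<lhd> G_grp l" if "H \<in> set [generate (G_grp l) {n_map l}, generate (G_grp l) {r_map l}]" for H
    using that gens_K by (auto intro!: K.subgroup_imp_normal K.generate_is_subgroup)
  have s1: "{\<one>\<^bsub>G_grp l\<^esub>, n_map l} <#>\<^bsub>G_grp l\<^esub> {\<one>\<^bsub>G_grp l\<^esub>} = {\<one>\<^bsub>G_grp l\<^esub>, n_map l}"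
    by (rule K.set_mult_one) (use gens_K in auto)
  have s2: "{\<one>\<^bsub>G_grp l\<^esub>, r_map l} <#>\<^bsub>G_grp l\<^esub> {\<one>\<^bsub>G_grp l\<^esub>} = {\<one>\<^bsub>G_grp l\<^esub>, r_map l}"
    by (rule K.set_mult_one) (use gens_K in auto)
  have inter: "\<forall>i<length [generate (G_grp l) {n_map l}, generate (G_grp l) {r_map l}].
     [generate (G_grp l) {n_map l}, generate (G_grp l) {r_map l}] ! i \<inter>
     subgroups_prod (G_grp l) (take i [generate (G_grp l) {n_map l}, generate (G_grp l) {r_map l}] @
        drop (Suc i) [generate (G_grp l) {n_map l}, generate (G_grp l) {r_map l}]) = {\<one>\<^bsub>G_grp l\<^esub>}"
  proof (intro allI impI)
    fix i assume "i < length [generate (G_grp l) {n_map l}, generate (G_grp l) {r_map l}]"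
    then have "i = 0 \<or> i = 1" by auto
    then show "[generate (G_grp l) {n_map l}, generate (G_grp l) {r_map l}] ! i \<inter>
     subgroups_prod (G_grp l) (take i [generate (G_grp l) {n_map l}, generate (G_grp l) {r_map l}] @
        drop (Suc i) [generate (G_grp l) {n_map l}, generate (G_grp l) {r_map l}]) = {\<one>\<^bsub>G_grp l\<^esub>}"
      using nr by (auto simp: gn gr subgroups_prod_Cons subgroups_prod_Nil s1 s2)
  qed
  show ?thesis
    unfolding internal_direct_product_def
    using normal full inter K.ord2[OF _ gen_invol n1] K.ord2[OF _ gen_invol r1] gens_K by auto
qed



lemma case_oddbig: assumes odd: "odd l" and l1: "l > 1" shows
  "internal_direct_product (G_grp l)
            [generate (G_grp l) {n_map l}, generate (G_grp l) {h_map l},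
             generate (G_grp l) {r_map l}]
          \<and> group.ord (G_grp l) (n_map l) = 2 \<and> group.ord (G_grp l) (h_map l) = 2
          \<and> group.ord (G_grp l) (r_map l) = 2"
proof -
  interpret K: comm_group "G_grp l" by (rule odd_comm[OF odd])
  have l2: "l \<ge> 2" using l1 by simp
  have l3: "l - 1 \<ge> 2" using l1 odd by (cases l) auto
  note w1 = wit_props[OF l2, of 1, simplified]
  note w2 = wit_props[OF l2, of 2, simplified]
  define w3 where "w3 = wit l 1 + monom 1 1"
  have w3d: "degree w3 = l - 1" unfolding w3_def using w1 l3
    by (subst degree_add_eq_left) (auto simp: degree_monom_eq)
  have w3c: "coeff w3 0 = 1" "coeff w3 1 = 1" using w1 l3 unfolding w3_def
    by (auto simp: wit_def coeff_monom)
  have w3P: "w3 \<in> Pl l" using w3d w3c by (simp add: Pl_def)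
  note EV = ev_simps K_one_val coeff_tilde coeff0_dagger degree_tilde w1 w2
  have n1: "n_map l \<noteq> \<one>\<^bsub>G_grp l\<^esub>" by (rule neq_via[OF w1(1), of _ 0]) (simp add: EV)
  have h1: "h_map l \<noteq> \<one>\<^bsub>G_grp l\<^esub>" by (rule neq_via[OF w3P, of _ 1]) (simp add: EV w3P w3c w3c[unfolded One_nat_def])
  have r1: "r_map l \<noteq> \<one>\<^bsub>G_grp l\<^esub>" by (rule neq_via[OF w2(1), of _ 0]) (simp add: EV)
  have nh: "n_map l \<noteq> h_map l" by (rule neq_via[OF w1(1), of _ 0]) (simp add: EV)
  have nr: "n_map l \<noteq> r_map l" by (rule neq_via[OF w1(1), of _ 0]) (simp add: EV)
  have nhr: "n_map l \<noteq> h_map l \<otimes>\<^bsub>G_grp l\<^esub> r_map l" by (rule neq_via[OF w1(1), of _ 0]) (simp add: EV)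
  have hr: "h_map l \<noteq> r_map l" by (rule neq_via[OF w2(1), of _ 0]) (simp add: EV)
  have hnr: "h_map l \<noteq> n_map l \<otimes>\<^bsub>G_grp l\<^esub> r_map l" by (rule neq_via[OF w1(1), of _ 0]) (simp add: EV)
  have rnh: "r_map l \<noteq> n_map l \<otimes>\<^bsub>G_grp l\<^esub> h_map l" by (rule neq_via[OF w1(1), of _ 0]) (simp add: EV)
  have gn: "generate (G_grp l) {n_map l} = {\<one>\<^bsub>G_grp l\<^esub>, n_map l}"
    by (rule K.invol_generate) (use gens_K gen_invol in auto)
  have gh: "generate (G_grp l) {h_map l} = {\<one>\<^bsub>G_grp l\<^esub>, h_map l}"
    by (rule K.invol_generate) (use gens_K gen_invol in auto)
  have gr: "generate (G_grp l) {r_map l} = {\<one>\<^bsub>G_grp l\<^esub>, r_map l}"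
    by (rule K.invol_generate) (use gens_K gen_invol in auto)
  let ?Hs = "[generate (G_grp l) {n_map l}, generate (G_grp l) {h_map l}, generate (G_grp l) {r_map l}]"
  have full: "subgroups_prod (G_grp l) ?Hs = carrier (G_grp l)"
    by (rule prod_full[OF odd]) auto
  have normal: "H \<lhd> G_grp l" if "H \<in> set ?Hs" for H
    using that gens_K by (auto intro!: K.subgroup_imp_normal K.generate_is_subgroup)
  have one1: "{\<one>\<^bsub>G_grp l\<^esub>, g} <#>\<^bsub>G_grp l\<^esub> {\<one>\<^bsub>G_grp l\<^esub>} = {\<one>\<^bsub>G_grp l\<^esub>, g}"
    if "g \<in> carrier (G_grp l)" for g
    by (rule K.set_mult_one) (use that in auto)
  have pr: "{\<one>\<^bsub>G_grp l\<^esub>, a} <#>\<^bsub>G_grp l\<^esub> {\<one>\<^bsub>G_grp l\<^esub>, b} =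
       {\<one>\<^bsub>G_grp l\<^esub>, b, a, a \<otimes>\<^bsub>G_grp l\<^esub> b}"
    if "a \<in> carrier (G_grp l)" "b \<in> carrier (G_grp l)" for a b
    by (rule K.set_mult_pairs) (use that in auto)
  have inter: "\<forall>i<length ?Hs. ?Hs ! i \<inter> subgroups_prod (G_grp l) (take i ?Hs @ drop (Suc i) ?Hs) = {\<one>\<^bsub>G_grp l\<^esub>}"
  proof (intro allI impI)
    fix i assume "i < length ?Hs"
    then have "i = 0 \<or> i = 1 \<or> i = 2" by auto
    then show "?Hs ! i \<inter> subgroups_prod (G_grp l) (take i ?Hs @ drop (Suc i) ?Hs) = {\<one>\<^bsub>G_grp l\<^esub>}"
      using nh nr nhr hr hnr rnh gens_K
      by (auto simp: gn gh gr subgroups_prod_Cons subgroups_prod_Nil one1 pr)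
  qed
  show ?thesis
    unfolding internal_direct_product_def
    using normal full inter K.ord2[OF _ gen_invol n1] K.ord2[OF _ gen_invol h1] K.ord2[OF _ gen_invol r1] gens_K
    by auto
qed



lemma case_even: assumes ev: "even l" and l1: "l \<ge> 1" shows
  "G_grp l \<cong> dihedral8
          \<and> carrier (G_grp l) = generate (G_grp l) {r_map l \<otimes>\<^bsub>G_grp l\<^esub> h_map l, h_map l}
          \<and> group.ord (G_grp l) (r_map l \<otimes>\<^bsub>G_grp l\<^esub> h_map l) = 4
          \<and> group.ord (G_grp l) (h_map l) = 2
          \<and> h_map l \<otimes>\<^bsub>G_grp l\<^esub> (r_map l \<otimes>\<^bsub>G_grp l\<^esub> h_map l) \<otimes>\<^bsub>G_grp l\<^esub> inv\<^bsub>G_grp l\<^esub> (h_map l)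
              = inv\<^bsub>G_grp l\<^esub> (r_map l \<otimes>\<^bsub>G_grp l\<^esub> h_map l)"
proof -
  interpret K: group "G_grp l" by (rule K_group)
  have l2: "l \<ge> 2" using l1 ev by (metis One_nat_def dvd_refl le_antisym not_less_eq_eq numeral_2_eq_2 odd_one)
  have m1: "(-1::complex) ^ (l - 1) = -1" using l2 ev by (simp add: minus_one_power_iff)
  note w1 = wit_props[OF l2, of 1, simplified]
  note w2 = wit_props[OF l2, of 2, simplified]
  note EV = ev_simps K_one_val coeff_tilde coeff0_dagger degree_tilde w1 w2 m1 m1[unfolded One_nat_def]
  define n where "n = n_map l"
  define h where "h = h_map l"
  define r where "r = r_map l"
  define x where "x = r \<otimes>\<^bsub>G_grp l\<^esub> h"
  have nc: "n \<in> carrier (G_grp l)" and hc: "h \<in> carrier (G_grp l)" and rc: "r \<in> carrier (G_grp l)"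
    using gens_K by (auto simp: n_def h_def r_def)
  have xc: "x \<in> carrier (G_grp l)" using rc hc by (simp add: x_def)
  have nn: "n \<otimes>\<^bsub>G_grp l\<^esub> n = \<one>\<^bsub>G_grp l\<^esub>" using gen_invol by (simp add: n_def)
  have hh: "h \<otimes>\<^bsub>G_grp l\<^esub> h = \<one>\<^bsub>G_grp l\<^esub>" using gen_invol by (simp add: h_def)
  have xx: "x \<otimes>\<^bsub>G_grp l\<^esub> x = n" using rh_sq[OF ev l1] by (simp add: x_def n_def r_def h_def)
  have hx: "h \<otimes>\<^bsub>G_grp l\<^esub> x = n \<otimes>\<^bsub>G_grp l\<^esub> r" using h_rh[OF ev l1] by (simp add: x_def n_def r_def h_def)
  have xh: "x \<otimes>\<^bsub>G_grp l\<^esub> h = r" using rc hc hh by (simp add: x_def K.m_assoc)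
  have n1: "n \<noteq> \<one>\<^bsub>G_grp l\<^esub>" unfolding n_def by (rule neq_via[OF w1(1), of _ 0]) (simp add: EV)
  have h1: "h \<noteq> \<one>\<^bsub>G_grp l\<^esub>" unfolding h_def by (rule neq_via[OF w1(1), of _ "l - 1"]) (simp add: EV)
  have hxne: "h \<noteq> x" unfolding h_def x_def r_def by (rule neq_via[OF w1(1), of _ 0]) (simp add: EV)
  have hn: "h \<noteq> n" unfolding h_def n_def by (rule neq_via[OF w1(1), of _ 0]) (simp add: EV)
  have hnx: "h \<noteq> n \<otimes>\<^bsub>G_grp l\<^esub> x" unfolding h_def n_def x_def r_def
    by (rule neq_via[OF w2(1), of _ 0]) (simp add: EV)
  have x2: "x [^]\<^bsub>G_grp l\<^esub> (2::nat) = n" using K.pow2[OF xc] xx by simp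
  have x3: "x [^]\<^bsub>G_grp l\<^esub> (3::nat) = n \<otimes>\<^bsub>G_grp l\<^esub> x" using K.pow3[OF xc] xx by simp
  have x4: "x [^]\<^bsub>G_grp l\<^esub> (4::nat) = \<one>\<^bsub>G_grp l\<^esub>" using K.pow4[OF xc] xx nn by simp
  have hx3: "h \<otimes>\<^bsub>G_grp l\<^esub> x = x [^]\<^bsub>G_grp l\<^esub> (3::nat) \<otimes>\<^bsub>G_grp l\<^esub> h"
    using x3 hx xh nc xc hc by (simp add: K.m_assoc)
  have hne: "h \<noteq> x [^]\<^bsub>G_grp l\<^esub> k" if "k < 4" for k :: nat
  proof -
    have "k = 0 \<or> k = 1 \<or> k = 2 \<or> k = 3" using that by auto
    then show ?thesis using h1 hxne hn hnx x2 x3 xc by auto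
  qed
  have gen: "carrier (G_grp l) \<subseteq> T" if T: "\<one>\<^bsub>G_grp l\<^esub> \<in> T" "x \<in> T" "h \<in> T"
    "\<And>u v. u \<in> T \<Longrightarrow> v \<in> T \<Longrightarrow> u \<otimes>\<^bsub>G_grp l\<^esub> v \<in> T" for T
  proof (rule K_gen)
    show "n_map l \<in> T" using T xx by (metis n_def)
    show "r_map l \<in> T" using T xh by (metis r_def)
  qed (use T in \<open>auto simp: h_def\<close>)
  have iso: "G_grp l \<cong> dihedral8"
    by (rule K.dihedral_iso[OF xc hc hh x4 _ hx3 hne gen]) (use x2 n1 in auto)
  have car: "carrier (G_grp l) = generate (G_grp l) {x, h}"
  proof
    show "carrier (G_grp l) \<subseteq> generate (G_grp l) {x, h}"
      by (rule gen) (auto intro: generate.one generate.incl generate.eng)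
    show "generate (G_grp l) {x, h} \<subseteq> carrier (G_grp l)"
      by (rule K.generate_incl) (use xc hc in auto)
  qed
  have ordx: "K.ord x = 4" by (rule K.ord4[OF xc x4]) (use x2 n1 in auto)
  have ordh: "K.ord h = 2" by (rule K.ord2[OF hc hh h1])
  have ih: "inv\<^bsub>G_grp l\<^esub> h = h" using K.inv_equality[OF hh hc hc] .
  have ix: "inv\<^bsub>G_grp l\<^esub> x = x [^]\<^bsub>G_grp l\<^esub> (3::nat)"
  proof (rule K.inv_equality)
    have "x [^]\<^bsub>G_grp l\<^esub> (3::nat) \<otimes>\<^bsub>G_grp l\<^esub> x = x [^]\<^bsub>G_grp l\<^esub> (Suc 3)"
      by (rule K.nat_pow_Suc[symmetric])
    then show "x [^]\<^bsub>G_grp l\<^esub> (3::nat) \<otimes>\<^bsub>G_grp l\<^esub> x = \<one>\<^bsub>G_grp l\<^esub>" using x4 by simp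
  qed (use xc in auto)
  have conj: "h \<otimes>\<^bsub>G_grp l\<^esub> x \<otimes>\<^bsub>G_grp l\<^esub> inv\<^bsub>G_grp l\<^esub> h = inv\<^bsub>G_grp l\<^esub> x"
    using hx3 ih ix hh xc hc by (simp add: K.m_assoc)
  show ?thesis using iso car ordx ordh conj by (simp add: x_def h_def r_def)
qed

theorem proposition3p2:
  fixes l :: nat
  assumes "l \<ge> 1"
  shows
    "{n_map l, h_map l, r_map l} \<subseteq> carrier (BijGroup (Pl l))
     \<and> group (G_grp l)
     \<and> (l = 1 \<longrightarrow>
          internal_direct_product (G_grp l)
            [generate (G_grp l) {n_map l}, generate (G_grp l) {r_map l}]
          \<and> group.ord (G_grp l) (n_map l) = 2 \<and> group.ord (G_grp l) (r_map l) = 2)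
     \<and> (odd l \<and> l > 1 \<longrightarrow>
          internal_direct_product (G_grp l)
            [generate (G_grp l) {n_map l}, generate (G_grp l) {h_map l},
             generate (G_grp l) {r_map l}]
          \<and> group.ord (G_grp l) (n_map l) = 2 \<and> group.ord (G_grp l) (h_map l) = 2
          \<and> group.ord (G_grp l) (r_map l) = 2)
     \<and> (even l \<longrightarrow>
          G_grp l \<cong> dihedral8
          \<and> carrier (G_grp l) = generate (G_grp l) {r_map l \<otimes>\<^bsub>G_grp l\<^esub> h_map l, h_map l}
          \<and> group.ord (G_grp l) (r_map l \<otimes>\<^bsub>G_grp l\<^esub> h_map l) = 4
          \<and> group.ord (G_grp l) (h_map l) = 2
          \<and> h_map l \<otimes>\<^bsub>G_grp l\<^esub> (r_map l \<otimes>\<^bsub>G_grp l\<^esub> h_map l) \<otimes>\<^bsub>G_grp l\<^esub> inv\<^bsub>G_grp l\<^esub> (h_map l)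
              = inv\<^bsub>G_grp l\<^esub> (r_map l \<otimes>\<^bsub>G_grp l\<^esub> h_map l))
     \<and> (\<forall>t \<in> carrier (G_grp l). \<forall>f \<in> Pl l. \<forall>p::real. p \<ge> 1 \<longrightarrow>
          lp_norm p (t f) = lp_norm p f
          \<and> lp_norm p (t f * tilde (t f)) = lp_norm p (f * tilde f))"
proof -
  have c1: "{n_map l, h_map l, r_map l} \<subseteq> carrier (BijGroup (Pl l))"
    using gens_Bij by (simp add: BijGroup_def)
  have c3: "l = 1 \<longrightarrow>
          internal_direct_product (G_grp l)
            [generate (G_grp l) {n_map l}, generate (G_grp l) {r_map l}]
          \<and> group.ord (G_grp l) (n_map l) = 2 \<and> group.ord (G_grp l) (r_map l) = 2"
    using case_one by blast
  have c4: "odd l \<and> l > 1 \<longrightarrow>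
          internal_direct_product (G_grp l)
            [generate (G_grp l) {n_map l}, generate (G_grp l) {h_map l},
             generate (G_grp l) {r_map l}]
          \<and> group.ord (G_grp l) (n_map l) = 2 \<and> group.ord (G_grp l) (h_map l) = 2
          \<and> group.ord (G_grp l) (r_map l) = 2"
    using case_oddbig by blast
  have c5: "even l \<longrightarrow>
          G_grp l \<cong> dihedral8
          \<and> carrier (G_grp l) = generate (G_grp l) {r_map l \<otimes>\<^bsub>G_grp l\<^esub> h_map l, h_map l}
          \<and> group.ord (G_grp l) (r_map l \<otimes>\<^bsub>G_grp l\<^esub> h_map l) = 4
          \<and> group.ord (G_grp l) (h_map l) = 2
          \<and> h_map l \<otimes>\<^bsub>G_grp l\<^esub> (r_map l \<otimes>\<^bsub>G_grp l\<^esub> h_map l) \<otimes>\<^bsub>G_grp l\<^esub> inv\<^bsub>G_grp l\<^esub> (h_map l)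
              = inv\<^bsub>G_grp l\<^esub> (r_map l \<otimes>\<^bsub>G_grp l\<^esub> h_map l)"
    using case_even assms by blast
  have c6: "\<forall>t \<in> carrier (G_grp l). \<forall>f \<in> Pl l. \<forall>p::real. p \<ge> 1 \<longrightarrow>
          lp_norm p (t f) = lp_norm p f
          \<and> lp_norm p (t f * tilde (t f)) = lp_norm p (f * tilde f)"
    using norm_inv by blast
  show ?thesis using c1 K_group c3 c4 c5 c6 by blast
qed

end
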